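(* Let $m\ge2$ be even, $\beta>1$, and let $E_{\mathrm{hsc},m}$ be the $m\times2$ matrix whose $j$-th row is $(\cos(j\pi/m),\sin(j\pi/m))$. Let $E_1,E_2$ be its first and last $m/2$ rows, $v_\beta:=(\beta^{-1},\dots,\beta^{-m/2})$, and let $W$ be the $2\times2$ matrix with rows $v_\beta E_1$ and $v_\beta E_2$. Then $$\sigma_{\min}(W)=\|v_\beta E_1\|_2=\frac{(1+\beta^{-m})^{1/2}}{|\beta-e^{\pi i/m}|}\ \ge\ \beta^{-1},$$ with equality in the last inequality if and only if $m=2$.
   Context: $\sigma_{\min}$ denotes the smallest singular value. *)

theory Defs
  imports "HOL-Analysis.Analysis"
begin

definition hsc_row :: "nat \<Rightarrow> nat \<Rightarrow> real^2" where
  "hsc_row m j = vector [cos (real j * pi / real m), sin (real j * pi / real m)]"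

definition vE1 :: "nat \<Rightarrow> real \<Rightarrow> real^2" where
  "vE1 m \<beta> = (\<Sum>j = 1..m div 2. (inverse \<beta>) ^ j *\<^sub>R hsc_row m j)"

definition vE2 :: "nat \<Rightarrow> real \<Rightarrow> real^2" where
  "vE2 m \<beta> = (\<Sum>j = 1..m div 2. (inverse \<beta>) ^ j *\<^sub>R hsc_row m (m div 2 + j))"

definition W_hsc :: "nat \<Rightarrow> real \<Rightarrow> real^2^2" where
  "W_hsc m \<beta> = vector [vE1 m \<beta>, vE2 m \<beta>]"

definition sigma_min :: "real^'n^'n \<Rightarrow> real" where
  "sigma_min A = sqrt (Min {\<mu>. \<exists>x. x \<noteq> 0 \<and> (transpose A ** A) *v x = \<mu> *\<^sub>R x})"

end

theory Submission
  imports Defs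
begin

lemma cos_ge_half:
  fixes m :: nat assumes "m \<ge> 3"
  shows "cos (pi / real m) \<ge> 1/2"
proof -
  have "pi / real m \<le> pi / 3" using assms
    by (intro divide_left_mono) auto
  moreover have "0 \<le> pi / real m" by simp
  ultimately have "cos (pi/3) \<le> cos (pi / real m)"
    by (intro cos_monotone_0_pi_le) auto
  thus ?thesis by (simp add: cos_60)
qed

theorem mainTheorem4:
  fixes m :: nat and \<beta> :: real
  assumes "even m" and "m \<ge> 2" and "\<beta> > 1"
  shows "sigma_min (W_hsc m \<beta>) = norm (vE1 m \<beta>)
    \<and> norm (vE1 m \<beta>) = sqrt (1 + (inverse \<beta>) ^ m)
          / cmod (complex_of_real \<beta> - exp (\<i> * complex_of_real (pi / real m)))
    \<and> sqrt (1 + (inverse \<beta>) ^ m)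
          / cmod (complex_of_real \<beta> - exp (\<i> * complex_of_real (pi / real m))) \<ge> inverse \<beta>
    \<and> (sqrt (1 + (inverse \<beta>) ^ m)
          / cmod (complex_of_real \<beta> - exp (\<i> * complex_of_real (pi / real m))) = inverse \<beta>
        \<longleftrightarrow> m = 2)"
proof -
  define n where "n = m div 2"
  define \<theta> where "\<theta> = pi / real m"
  define r where "r = inverse \<beta>"
  define z where "z = cis \<theta>"
  define S where "S = (\<Sum>j = 1..n. complex_of_real (r ^ j) * cis (real j * \<theta>))"
  have mn: "m = 2 * n" using assms(1) by (simp add: n_def)
  have npos: "n \<ge> 1" using assms(2) mn by simp
  have rm: "real m = 2 * real n" using mn by simp
  have r0: "r > 0" "r < 1" using assms(3) by (auto simp: r_def inverse_less_1_iff)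
  have br: "\<beta> * r = 1" using assms(3) by (simp add: r_def)
  have ang: "real j * pi / real m = real j * \<theta>" for j by (simp add: \<theta>_def)
  have c1: "vE1 m \<beta> $ 1 = Re S"
    unfolding vE1_def S_def n_def[symmetric] r_def[symmetric]
    by (simp add: sum_component Re_sum hsc_row_def ang cis.sel)
  have c2: "vE1 m \<beta> $ 2 = Im S"
    unfolding vE1_def S_def n_def[symmetric] r_def[symmetric]
    by (simp add: sum_component Im_sum hsc_row_def ang cis.sel)
  have angn: "(real n + real j) * pi / real m = pi/2 + real j * \<theta>" for j
    using npos by (simp add: \<theta>_def rm field_simps)
  have d1: "vE2 m \<beta> $ 1 = - vE1 m \<beta> $ 2"
    unfolding vE2_def vE1_def n_def[symmetric]
    by (simp add: sum_component hsc_row_def angn ang cos_add sin_add sum_negf)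
  have d2: "vE2 m \<beta> $ 2 = vE1 m \<beta> $ 1"
    unfolding vE2_def vE1_def n_def[symmetric]
    by (simp add: sum_component hsc_row_def angn ang cos_add sin_add)
  define a1 where "a1 = vE1 m \<beta> $ 1"
  define a2 where "a2 = vE1 m \<beta> $ 2"
  have WW: "(transpose (W_hsc m \<beta>) ** W_hsc m \<beta>) *v x = (a1\<^sup>2 + a2\<^sup>2) *\<^sub>R x" for x
    unfolding vec_eq_iff forall_2
    by (simp add: matrix_vector_mult_def matrix_matrix_mult_def transpose_def sum_2
        W_hsc_def d1 d2 a1_def[symmetric] a2_def[symmetric] power2_eq_square algebra_simps)
  have set: "{\<mu>. \<exists>x. x \<noteq> 0 \<and> (transpose (W_hsc m \<beta>) ** W_hsc m \<beta>) *v x = \<mu> *\<^sub>R x}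
      = {a1\<^sup>2 + a2\<^sup>2}"
  proof (intro equalityI subsetI)
    fix \<mu> assume "\<mu> \<in> {\<mu>. \<exists>x. x \<noteq> 0 \<and> (transpose (W_hsc m \<beta>) ** W_hsc m \<beta>) *v x = \<mu> *\<^sub>R x}"
    then obtain x where x0: "x \<noteq> 0" "(transpose (W_hsc m \<beta>) ** W_hsc m \<beta>) *v x = \<mu> *\<^sub>R x" by auto
    hence x: "x \<noteq> 0" "(a1\<^sup>2 + a2\<^sup>2) *\<^sub>R x = \<mu> *\<^sub>R x" unfolding WW by auto
    hence "(a1\<^sup>2 + a2\<^sup>2 - \<mu>) *\<^sub>R x = 0" by (simp add: algebra_simps)
    thus "\<mu> \<in> {a1\<^sup>2 + a2\<^sup>2}" using x(1) by simp
  next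
    fix \<mu> assume "\<mu> \<in> {a1\<^sup>2 + a2\<^sup>2}"
    thus "\<mu> \<in> {\<mu>. \<exists>x. x \<noteq> 0 \<and> (transpose (W_hsc m \<beta>) ** W_hsc m \<beta>) *v x = \<mu> *\<^sub>R x}"
    proof (intro CollectI exI conjI)
      show "(vec 1 :: real^2) \<noteq> 0" by (simp add: vec_eq_iff)
      show "(transpose (W_hsc m \<beta>) ** W_hsc m \<beta>) *v vec 1 = \<mu> *\<^sub>R (vec 1 :: real^2)"
        using WW[of "vec 1"] \<open>\<mu> \<in> {a1\<^sup>2 + a2\<^sup>2}\<close> by simp
    qed
  qed
  have nrm: "norm (vE1 m \<beta>) = sqrt (a1\<^sup>2 + a2\<^sup>2)"
    by (simp add: norm_vec_def L2_set_def sum_2 a1_def a2_def)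
  have part1: "sigma_min (W_hsc m \<beta>) = norm (vE1 m \<beta>)"
    unfolding sigma_min_def set nrm by simp
  have nS: "norm (vE1 m \<beta>) = cmod S"
    unfolding nrm a1_def a2_def c1 c2 by (simp add: cmod_def)
  define w where "w = complex_of_real r * z"
  have Sw: "S = (\<Sum>j = 1..n. w ^ j)"
    unfolding S_def w_def z_def
    by (simp only: power_mult_distrib Complex.DeMoivre of_real_power)
  have gp: "(1 - w) * S = w ^ 1 - w ^ Suc n"
    unfolding Sw using npos by (rule sum_gp_multiplied)
  have bz: "complex_of_real \<beta> * (1 - w) = complex_of_real \<beta> - z"
    unfolding w_def using br
    by (simp add: algebra_simps flip: of_real_mult)
  have key: "(complex_of_real \<beta> - z) * S = z * (1 - w ^ n)"
  proof -
    have "(complex_of_real \<beta> - z) * S = complex_of_real \<beta> * ((1 - w) * S)"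
      by (simp add: bz[symmetric] mult.assoc)
    also have "\<dots> = complex_of_real \<beta> * w * (1 - w ^ n)"
      unfolding gp by (simp add: algebra_simps)
    also have "complex_of_real \<beta> * w = z" unfolding w_def using br
      by (simp flip: of_real_mult add: mult.assoc[symmetric])
    finally show ?thesis .
  qed
  have wn: "w ^ n = \<i> * complex_of_real (r ^ n)"
  proof -
    have h: "real n * \<theta> = pi / 2" using npos by (simp add: \<theta>_def rm)
    have "cis (real n * \<theta>) = \<i>" unfolding h using cis_pi_half by simp
    thus ?thesis unfolding w_def z_def
      by (simp only: power_mult_distrib Complex.DeMoivre of_real_power mult.commute)
  qed
  have one: "1 - \<i> * complex_of_real (r ^ n) = Complex 1 (- (r ^ n))"
    by (simp add: complex_eq_iff)
  have cz: "cmod z = 1" by (simp add: z_def)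
  have r2n: "(r ^ n)\<^sup>2 = r ^ m" by (simp add: mn power_mult[symmetric] mult.commute)
  define D where "D = cmod (complex_of_real \<beta> - z)"
  have keyn: "D * cmod S = sqrt (1 + r ^ m)"
    using arg_cong[OF key, of cmod]
    unfolding D_def norm_mult cz wn one complex_norm r2n by (simp add: r2n)
  have Dc: "complex_of_real \<beta> - z = Complex (\<beta> - cos \<theta>) (- sin \<theta>)"
    by (simp add: z_def complex_eq_iff)
  have D2: "D\<^sup>2 = \<beta>\<^sup>2 - 2 * \<beta> * cos \<theta> + 1"
  proof -
    have "D\<^sup>2 = (\<beta> - cos \<theta>)\<^sup>2 + (- sin \<theta>)\<^sup>2"
      unfolding D_def Dc complex_norm by (simp add: add_nonneg_nonneg)
    thus ?thesis using sin_cos_squared_add[of \<theta>] by (simp add: power2_eq_square algebra_simps)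
  qed
  have Dpos: "D > 0"
  proof -
    have "D \<ge> cmod (complex_of_real \<beta>) - cmod z" unfolding D_def by (rule norm_triangle_ineq2)
    thus ?thesis using cz assms(3) by simp
  qed
  have ez: "exp (\<i> * complex_of_real (pi / real m)) = z"
    by (simp add: z_def \<theta>_def cis_conv_exp)
  define X where "X = sqrt (1 + r ^ m)"
  have X0: "X \<ge> 0" using r0 by (simp add: X_def add_nonneg_nonneg)
  have part2: "cmod S = X / D" using keyn Dpos by (simp add: X_def field_simps)
  have X2: "X\<^sup>2 = 1 + r ^ m" unfolding X_def using r0 by (simp add: add_nonneg_nonneg)
  have rD2: "(r * D)\<^sup>2 = 1 - 2 * r * cos \<theta> + r\<^sup>2"
    unfolding power_mult_distrib D2 using br
    by (simp add: power2_eq_square algebra_simps)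
  have ineq: "r * D \<le> X \<and> (r * D = X \<longleftrightarrow> m = 2)"
  proof (cases "m = 2")
    case True
    have th: "\<theta> = pi / 2" by (simp add: \<theta>_def True)
    have cz0: "cos \<theta> = 0" unfolding th by simp
    have "(r * D)\<^sup>2 = X\<^sup>2" using X2 rD2 True cz0 by (simp add: power2_eq_square)
    hence "r * D = X" using X0 Dpos r0 by (simp add: power2_eq_iff_nonneg)
    thus ?thesis using True by simp
  next
    case False
    hence m3: "m \<ge> 3" using assms(2) by simp
    have c: "cos \<theta> \<ge> 1/2" unfolding \<theta>_def using cos_ge_half[OF m3] .
    have "r * r < r * (2 * cos \<theta>)" using r0 c by (intro mult_strict_left_mono) auto
    moreover have "r ^ m > 0" using r0 by simp
    ultimately have "(r * D)\<^sup>2 < X\<^sup>2" unfolding rD2 X2 by (simp add: power2_eq_square algebra_simps)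
    hence "r * D < X" using X0 by (rule power_less_imp_less_base)
    thus ?thesis using False by simp
  qed
  have ge: "X / D \<ge> r" using ineq Dpos by (simp add: field_simps)
  have eq: "X / D = r \<longleftrightarrow> m = 2" using ineq Dpos by (auto simp: field_simps)
  show ?thesis
    using part1 nS part2 ge eq
    unfolding ez D_def[symmetric] X_def[symmetric] r_def[symmetric] by simp
qed

end
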